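(* Let $\Delta>1$ and $D\le n/2$. Suppose $M\in\mathbb{F}_2^{m\times n}$ is a matrix capable of $\Delta$-approximating $d=\|\mathbf{x}\|_0$ (in the group testing model) for all $\mathbf{x}\in\mathbb{F}_2^n$ with $d\le D$. Then necessarily $$m\ge\left(\frac{D}{\Delta^2}-1\right)\log\frac{n}{D-\Delta^2}-\left(\frac{D}{\Delta^2}-1\right)\log e=\Omega\!\left(\frac{D}{\Delta^2}\log\frac{n}{D}\right).$$
   Context: $\log$ denotes $\log_2$. $\|\mathbf{x}\|_0$ is the number of nonzero entries of $\mathbf{x}$. Group testing model: for $M\in\mathbb{F}_2^{m\times n}$ and $\mathbf{x}\in\mathbb{F}_2^n$, $M\odot\mathbf{x}\in\mathbb{F}_2^m$ is defined by $(M\odot\mathbf{x})_i=\bigvee_{j:M_{ij}=1}\mathbf{x}_j$ (logical OR). $M$ is capable of $\Delta$-approximating $d$ when $d\le D$ if there is a deterministic decoder which, given only $M\odot\mathbf{x}$, outputs $\hat d$ with $\frac1\Delta\le\frac{\hat d}{d}\le\Delta$ for every $\mathbf{x}$ with $d=\|\mathbf{x}\|_0\le D$. *)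

theory Defs
  imports Complex_Main
begin

text \<open>A binary m x n matrix over F_2 is a function M :: nat => nat => bool, entries M i j
  for i < m, j < n.  A vector x in F_2^n is x :: nat => bool, coordinates j < n.\<close>

definition weight :: "nat \<Rightarrow> (nat \<Rightarrow> bool) \<Rightarrow> nat" where
  "weight n x = card {j. j < n \<and> x j}"

definition gt_outcome :: "nat \<Rightarrow> nat \<Rightarrow> (nat \<Rightarrow> nat \<Rightarrow> bool) \<Rightarrow> (nat \<Rightarrow> bool) \<Rightarrow> (nat \<Rightarrow> bool)" where
  "gt_outcome m n M x = (\<lambda>i. i < m \<and> (\<exists>j<n. M i j \<and> x j))"

text \<open>M is capable of Delta-approximating d when d <= D: there is a deterministic decoder
  which, from the outcome alone, outputs an estimate within ratio Delta of d
  (for every nonzero x, the ratio being undefined for d = 0).\<close>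
definition approx_capable :: "nat \<Rightarrow> nat \<Rightarrow> (nat \<Rightarrow> nat \<Rightarrow> bool) \<Rightarrow> real \<Rightarrow> nat \<Rightarrow> bool" where
  "approx_capable m n M \<Delta> D \<longleftrightarrow>
     (\<exists>dec :: (nat \<Rightarrow> bool) \<Rightarrow> real. \<forall>x :: nat \<Rightarrow> bool.
        1 \<le> weight n x \<and> weight n x \<le> D \<longrightarrow>
          1 / \<Delta> \<le> dec (gt_outcome m n M x) / real (weight n x) \<and>
          dec (gt_outcome m n M x) / real (weight n x) \<le> \<Delta>)"

end

theory Submission
  imports Defs
begin

lemma core:
  assumes cap: "approx_capable m n M \<Delta> D" and D1: "\<Delta> > 1"
    and a1: "1 \<le> a" and bD: "b + 1 \<le> D" and bgt: "real (b+1) > \<Delta>\<^sup>2 * real a"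
  shows "(n choose a) \<le> 2^m * (b choose a)"
proof -
  obtain dec where H: "\<And>x. 1 \<le> weight n x \<and> weight n x \<le> D \<Longrightarrow>
          1 / \<Delta> \<le> dec (gt_outcome m n M x) / real (weight n x) \<and>
          dec (gt_outcome m n M x) / real (weight n x) \<le> \<Delta>"
    using cap unfolding approx_capable_def by blast
  define A where "A = {S. S \<subseteq> {..<n} \<and> card S = a}"
  define f where "f S = gt_outcome m n M (\<lambda>j. j \<in> S)" for S
  have wt: "weight n (\<lambda>j. j\<in>S) = card S" if "S \<subseteq> {..<n}" for S
  proof -
    have "{j. j < n \<and> j \<in> S} = S" using that by auto
    thus ?thesis by (simp add: weight_def)
  qed
  have fib: "card (A \<inter> f -` {v}) \<le> (b choose a)" if vA: "v \<in> f ` A" for v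
  proof -
    obtain S0 where S0: "S0 \<in> A" "v = f S0" using vA by blast
    define U where "U = {j. j < n \<and> (\<forall>i<m. M i j \<longrightarrow> v i)}"
    have sub: "S \<subseteq> U" if "S \<in> A" "f S = v" for S
      using that unfolding U_def A_def f_def gt_outcome_def by auto
    have finU: "finite U" unfolding U_def by auto
    have cardU: "card U \<le> b"
    proof (rule ccontr)
      assume "\<not> card U \<le> b"
      hence cu: "b + 1 \<le> card U" by simp
      have "card S0 = a" using S0 by (simp add: A_def)
      have "a \<le> b + 1"
      proof -
        have "real a \<le> \<Delta>\<^sup>2 * real a" using D1 a1
          by (simp add: mult_le_cancel_right1 one_le_power)
        thus ?thesis using bgt by linarith
      qed
      then obtain T where T: "S0 \<subseteq> T" "T \<subseteq> U" "card T = b + 1"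
        using exists_subset_between[of S0 "b+1" U] cu sub[OF S0(1) S0(2)[symmetric]] finU
          \<open>card S0 = a\<close> by auto
      have TU: "T \<subseteq> {..<n}" using T(2) unfolding U_def by auto
      have fT: "f T = v"
      proof
        fix i
        show "f T i = v i"
        proof
          assume "f T i"
          then obtain j where "i < m" "j < n" "M i j" "j \<in> T" unfolding f_def gt_outcome_def by auto
          thus "v i" using T(2) unfolding U_def by auto
        next
          assume "v i"
          hence "f S0 i" using S0 by simp
          then obtain j where "i < m" "j < n" "M i j" "j \<in> S0" unfolding f_def gt_outcome_def by auto
          thus "f T i" using T(1) unfolding f_def gt_outcome_def by auto
        qed
      qed
      have S0n: "S0 \<subseteq> {..<n}" using S0 by (simp add: A_def)
      have e1: "dec v / real a \<le> \<Delta>"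
        using H[of "\<lambda>j. j \<in> S0"] wt[OF S0n] \<open>card S0 = a\<close> a1 bD S0(2) \<open>a \<le> b+1\<close>
        unfolding f_def by auto
      have e2: "1 / \<Delta> \<le> dec v / real (b+1)"
        using H[of "\<lambda>j. j \<in> T"] wt[OF TU] T(3) bD fT unfolding f_def by auto
      have "dec v \<le> \<Delta> * real a" using e1 a1 by (simp add: divide_le_eq)
      moreover have "real (b+1) \<le> \<Delta> * dec v" using e2 D1
        by (simp add: divide_le_eq le_divide_eq mult.commute)
      ultimately have "real (b+1) \<le> \<Delta> * (\<Delta> * real a)"
        using D1 by (smt (verit) mult_left_mono)
      thus False using bgt by (simp add: power2_eq_square mult.assoc)
    qed
    have "A \<inter> f -` {v} \<subseteq> {B. B \<subseteq> U \<and> card B = a}"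
      using sub unfolding A_def by auto
    hence "card (A \<inter> f -` {v}) \<le> card {B. B \<subseteq> U \<and> card B = a}"
      using finU by (intro card_mono) auto
    also have "\<dots> = card U choose a" using n_subsets[OF finU] .
    also have "\<dots> \<le> b choose a" using binomial_right_mono[OF cardU] .
    finally show ?thesis .
  qed
  have fA: "f ` A \<subseteq> (\<lambda>S i. i \<in> S) ` Pow {..<m}"
  proof
    fix v assume "v \<in> f ` A"
    then obtain S where "v = f S" by blast
    hence "v = (\<lambda>i. i \<in> {i. i < m \<and> v i})" unfolding f_def gt_outcome_def by auto
    thus "v \<in> (\<lambda>S i. i \<in> S) ` Pow {..<m}" by blast
  qed
  have cfA: "card (f ` A) \<le> 2^m"
  proof -
    have "card (f ` A) \<le> card ((\<lambda>S i. i \<in> S) ` Pow {..<m})"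
      by (rule card_mono[OF _ fA]) auto
    also have "\<dots> \<le> card (Pow {..<m::nat})" by (rule card_image_le) auto
    also have "\<dots> = 2^m" by (simp add: card_Pow)
    finally show ?thesis .
  qed
  have finA: "finite A" unfolding A_def by auto
  have "(n choose a) = card A" unfolding A_def using n_subsets[of "{..<n}" a] by simp
  also have "A = (\<Union>v\<in>f ` A. A \<inter> f -` {v})" by auto
  also have "card \<dots> \<le> (\<Sum>v\<in>f ` A. card (A \<inter> f -` {v}))"
    by (rule card_UN_le) (use finA in auto)
  also have "\<dots> \<le> (\<Sum>v\<in>f ` A. (b choose a))" by (rule sum_mono) (use fib in auto)
  also have "\<dots> = card (f ` A) * (b choose a)" by simp
  also have "\<dots> \<le> 2^m * (b choose a)" using cfA by simp
  finally show ?thesis .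
qed

lemma binom_ratio:
  "a \<le> b \<Longrightarrow> b \<le> n \<Longrightarrow> real n ^ a * real (b choose a) \<le> real (n choose a) * real b ^ a"
proof (induction a)
  case 0 then show ?case by simp
next
  case (Suc a)
  have IH: "real n ^ a * real (b choose a) \<le> real (n choose a) * real b ^ a" using Suc by simp
  have idn: "real (Suc a) * real (n choose Suc a) = real (n - a) * real (n choose a)"
    using binomial_absorption[of a n] binomial_absorb_comp[of n a] by (metis of_nat_mult)
  have idb: "real (Suc a) * real (b choose Suc a) = real (b - a) * real (b choose a)"
    using binomial_absorption[of a b] binomial_absorb_comp[of b a] by (metis of_nat_mult)
  have na: "real (n - a) = real n - real a" using Suc.prems by simp
  have ba: "real (b - a) = real b - real a" using Suc.prems by simp
  have key: "real n * (real b - real a) \<le> (real n - real a) * real b"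
  proof -
    have "real a * real b \<le> real a * real n" using Suc.prems by (intro mult_left_mono) auto
    thus ?thesis by (simp add: algebra_simps)
  qed
  have "real (Suc a) * (real n ^ Suc a * real (b choose Suc a))
      = real n * real n ^ a * (real (Suc a) * real (b choose Suc a))" by (simp add: algebra_simps)
  also have "\<dots> = real n * (real b - real a) * (real n ^ a * real (b choose a))"
    unfolding idb ba by (simp add: algebra_simps)
  also have "\<dots> \<le> (real n - real a) * real b * (real n ^ a * real (b choose a))"
    by (rule mult_right_mono[OF key]) simp
  also have "\<dots> \<le> (real n - real a) * real b * (real (n choose a) * real b ^ a)"
    by (rule mult_left_mono[OF IH]) (use Suc.prems in simp)
  also have "\<dots> = real b * real b ^ a * (real (n - a) * real (n choose a))"
    unfolding na by (simp add: algebra_simps)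
  also have "\<dots> = real (Suc a) * (real (n choose Suc a) * real b ^ Suc a)"
    unfolding idn[symmetric] by (simp add: algebra_simps)
  finally show ?case by (simp only: mult_le_cancel_left_pos of_nat_0_less_iff zero_less_Suc)
qed

lemma tlnt: "(t::real) > 0 \<Longrightarrow> t * ln t \<ge> - 1 / exp 1"
proof -
  assume t: "t > 0"
  have "ln (1 / (exp 1 * t)) \<le> 1 / (exp 1 * t) - 1" by (rule ln_le_minus_one) (use t in simp)
  also have "ln (1 / (exp 1 * t)) = - 1 - ln t" using t by (simp add: ln_div ln_mult)
  finally have "- ln t \<le> 1 / (exp 1 * t)" by simp
  hence "t * (- ln t) \<le> t * (1 / (exp 1 * t))" using t by (intro mult_left_mono) auto
  thus ?thesis using t by simp
qed

lemma ln2_half: "ln (2::real) \<ge> 1/2"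
proof -
  have "exp (1/2::real) ^ 2 = exp 1" by (simp add: exp_of_nat_mult[symmetric])
  hence "exp (1/2::real) ^ 2 \<le> 2^2" using exp_le by simp
  hence "exp (1/2::real) \<le> 2" by (rule power2_le_imp_le) simp
  hence "ln (exp (1/2::real)) \<le> ln 2" by (subst ln_le_cancel_iff) auto
  thus ?thesis by simp
qed

lemma ana:
  fixes a t c :: real
  assumes t: "t > 0" and at: "a \<ge> t" "a < t + 1" and c: "c \<ge> 2 * (t + 1)"
    and a12: "a = 1 \<or> a \<ge> 2"
  shows "a * (ln c - ln a) \<ge> t * (ln c - ln t) - t"
  using a12
proof
  assume a1: "a = 1"
  have "t \<le> 1" using at a1 by simp
  have lc: "ln c \<ge> ln 2" using c t by simp
  have "ln 2 \<le> (1 - t) * ln c + t"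
  proof -
    have "(1 - t) * ln 2 \<le> (1 - t) * ln c" using lc \<open>t \<le> 1\<close> by (intro mult_left_mono) auto
    moreover have "t * ln 2 \<le> t" using ln_2_less_1 t by simp
    ultimately show ?thesis by (simp add: algebra_simps)
  qed
  moreover have "1 / exp 1 \<le> (1::real)/2"
    using exp_ge_add_one_self[of 1] by (simp add: divide_simps)
  ultimately have "(1 - t) * ln c + t + t * ln t \<ge> 0" using tlnt[OF t] ln2_half by linarith
  thus ?thesis using a1 by (simp add: algebra_simps)
next
  assume a2: "a \<ge> 2"
  have tpos: "t > 1" using at a2 by simp
  have apos: "a > 0" using a2 by simp
  have "ln c \<ge> ln (2 * a)" using c at apos by simp
  hence lc: "ln c \<ge> ln 2 + ln a" using apos by (simp add: ln_mult)
  have l2: "ln (2::real) \<ge> 0" by simp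
  have f1: "(a - t) * ln c \<ge> (a - t) * (ln 2 + ln a)" using lc at by (intro mult_left_mono) auto
  have f2: "(a - t) * ln 2 \<ge> 0" using at l2 by (intro mult_nonneg_nonneg) auto
  have "ln a - ln t \<le> (a - t) / t" by (rule ln_diff_le) (use apos t in auto)
  hence f3: "t * (ln a - ln t) \<le> a - t" using t by (simp add: field_simps)
  have "a * (ln c - ln a) - (t * (ln c - ln t) - t)
      = (a - t) * ln c - (a - t) * ln a - t * (ln a - ln t) + t" by (simp add: algebra_simps)
  also have "\<dots> \<ge> (a - t) * ln 2 - (a - t) + t" using f1 f3 by (simp add: algebra_simps)
  finally show ?thesis using f2 tpos at by linarith
qed


theorem theorem2:
  fixes m n D :: nat and \<Delta> :: real and M :: "nat \<Rightarrow> nat \<Rightarrow> bool"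
  assumes "\<Delta> > 1"
    and "real D \<le> real n / 2"
    and "\<Delta>\<^sup>2 < real D"
    and "approx_capable m n M \<Delta> D"
  shows "real m \<ge> (real D / \<Delta>\<^sup>2 - 1) * log 2 (real n / (real D - \<Delta>\<^sup>2))
                  - (real D / \<Delta>\<^sup>2 - 1) * log 2 (exp 1)"
proof -
  note D1 = assms(1) and Dn = assms(2) and DD = assms(3) and cap = assms(4)
  define q where "q = real D / \<Delta>\<^sup>2"
  define t where "t = q - 1"
  have d2pos: "\<Delta>\<^sup>2 > 0" using D1 by simp
  have d2ge: "\<Delta>\<^sup>2 \<ge> 1" using D1 by (simp add: one_le_power)
  have q1: "q > 1" unfolding q_def using DD d2pos by (simp add: field_simps)
  have tpos: "t > 0" unfolding t_def using q1 by simp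
  define a where "a = nat \<lceil>q\<rceil> - 1"
  have ceil2: "\<lceil>q\<rceil> \<ge> 2" using q1 by (simp add: le_ceiling_iff)
  have ra: "real a = real_of_int \<lceil>q\<rceil> - 1" proof -
    have "nat \<lceil>q\<rceil> \<ge> 1" using ceil2 by linarith
    hence "real (nat \<lceil>q\<rceil> - 1) = real (nat \<lceil>q\<rceil>) - 1" by (simp add: of_nat_diff)
    moreover have "real (nat \<lceil>q\<rceil>) = real_of_int \<lceil>q\<rceil>" using ceil2 by simp
    ultimately show ?thesis unfolding a_def by linarith
  qed
  have a1: "a \<ge> 1" unfolding a_def using ceil2 by linarith
  have aq: "real a < q" using ra ceiling_correct[of q] by linarith
  have at: "real a \<ge> t" using ra unfolding t_def by linarith
  have at1: "real a < t + 1" using aq unfolding t_def by simp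
  define b where "b = nat \<lfloor>\<Delta>\<^sup>2 * real a\<rfloor>"
  have aDpos: "\<Delta>\<^sup>2 * real a \<ge> 1" using d2ge a1
    by (metis mult_mono' of_nat_1 of_nat_le_iff mult_1_right zero_le_one)
  have rb: "real b = real_of_int \<lfloor>\<Delta>\<^sup>2 * real a\<rfloor>" unfolding b_def
    using aDpos by simp
  have ble: "real b \<le> \<Delta>\<^sup>2 * real a" using rb by linarith
  have bgt: "real (b + 1) > \<Delta>\<^sup>2 * real a" using rb by linarith
  have aD: "\<Delta>\<^sup>2 * real a < real D" using aq d2pos unfolding q_def by (simp add: field_simps)
  have bD: "b + 1 \<le> D" using ble aD by linarith
  have ab: "a \<le> b"
  proof -
    have "real a \<le> \<Delta>\<^sup>2 * real a" using d2ge by (simp add: mult_le_cancel_right1)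
    thus ?thesis using rb by linarith
  qed
  have bn: "b \<le> n" using bD Dn by linarith
  have bpos: "real b > 0" using ab a1 by simp
  have npos: "real n > 0" using bn bpos by simp
  have c1: "(n choose a) \<le> 2^m * (b choose a)" by (rule core[OF cap D1 a1 bD bgt])
  have c2: "real n ^ a * real (b choose a) \<le> real (n choose a) * real b ^ a"
    by (rule binom_ratio[OF ab bn])
  have cbpos: "real (b choose a) > 0" using ab by simp
  have c1r: "real (n choose a) \<le> 2^m * real (b choose a)"
    using c1 of_nat_mono by fastforce
  have "real (n choose a) * real b ^ a \<le> (2^m * real (b choose a)) * real b ^ a"
    by (rule mult_right_mono[OF c1r]) simp
  hence "real n ^ a * real (b choose a) \<le> (2^m * real (b choose a)) * real b ^ a"
    using c2 by linarith
  hence "real n ^ a \<le> 2^m * real b ^ a" using cbpos by (simp add: algebra_simps)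
  hence "(real n / real b) ^ a \<le> 2^m" using bpos by (simp add: power_divide divide_le_eq)
  hence "ln ((real n / real b) ^ a) \<le> ln (2^m)" using npos bpos by (subst ln_le_cancel_iff) auto
  hence L1: "real a * ln (real n / real b) \<le> real m * ln 2" using npos bpos by (simp add: ln_realpow)
  define c where "c = real n / \<Delta>\<^sup>2"
  have ra_pos: "real a > 0" using a1 by simp
  have "ln (c / real a) \<le> ln (real n / real b)"
  proof -
    have "real n / (\<Delta>\<^sup>2 * real a) \<le> real n / real b"
      using ble bpos npos by (intro divide_left_mono) auto
    moreover have "c / real a = real n / (\<Delta>\<^sup>2 * real a)" unfolding c_def by simp
    ultimately show ?thesis using npos bpos d2pos ra_pos by simp
  qed
  hence L0: "real a * ln (c / real a) \<le> real a * ln (real n / real b)"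
    using ra_pos by (intro mult_left_mono) auto
  have cpos: "c > 0" unfolding c_def using npos d2pos by simp
  have "ln (c / real a) = ln c - ln (real a)" using cpos ra_pos by (simp add: ln_div)
  hence "real a * (ln c - ln (real a)) = real a * ln (c / real a)" by simp
  hence L2: "real a * (ln c - ln (real a)) \<le> real m * ln 2"
    using L0 L1 by linarith
  have cbig: "c \<ge> 2 * (t + 1)" unfolding c_def t_def q_def using Dn d2pos by (simp add: field_simps)
  have "a = 1 \<or> a \<ge> 2" using a1 by linarith
  hence a12: "real a = 1 \<or> real a \<ge> 2" by auto
  have A: "real a * (ln c - ln (real a)) \<ge> t * (ln c - ln t) - t"
    by (rule ana[OF tpos at at1 cbig a12])
  have eqD: "real D - \<Delta>\<^sup>2 = \<Delta>\<^sup>2 * t" unfolding t_def q_def using d2pos by (simp add: field_simps)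
  have "log 2 (real n / (real D - \<Delta>\<^sup>2)) = (ln c - ln t) / ln 2"
    unfolding eqD log_def c_def using npos d2pos tpos by (simp add: ln_div ln_mult)
  moreover have "log 2 (exp 1) = 1 / ln 2" by (simp add: log_def)
  moreover have tq: "real D / \<Delta>\<^sup>2 - 1 = t" unfolding t_def q_def ..
  ultimately have "(real D / \<Delta>\<^sup>2 - 1) * log 2 (real n / (real D - \<Delta>\<^sup>2))
                  - (real D / \<Delta>\<^sup>2 - 1) * log 2 (exp 1) = (t * (ln c - ln t) - t) / ln 2"
    unfolding tq by (simp add: diff_divide_distrib right_diff_distrib)
  also have "\<dots> \<le> real m" using A L2 by (simp add: divide_le_eq)
  finally show ?thesis .
qed

end
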